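(* Let $M$ be a quasi-minimal Lorentz surface in the pseudo-Euclidean space $\mathbb{E}^4_2$. If $M$ has parallel mean curvature vector field, then $M$ has flat normal connection.
   Context: $\mathbb{E}^4_2$ is $\mathbb{R}^4$ with the metric $\langle\cdot,\cdot\rangle = dx_1^2+dx_2^2-dx_3^2-dx_4^2$. A Lorentz surface in $\mathbb{E}^4_2$ is an immersed surface whose induced metric is Lorentzian (signature $(1,1)$); its normal bundle then also carries a metric of signature $(1,1)$. Let $h$ be the second fundamental form, $D$ the normal connection and $H=\frac12\operatorname{tr}h$ the mean curvature vector field. The surface is quasi-minimal if $H$ is lightlike at every point, i.e. $H\neq 0$ and $\langle H,H\rangle=0$. The mean curvature vector field is parallel if $DH=0$ identically. The normal connection is flat if the curvature tensor of $D$ vanishes identically (equivalently, the normal curvature $\varkappa$ vanishes). *)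

theory Defs
  imports "HOL-Analysis.Analysis"
begin

fun Ck_on :: "nat \<Rightarrow> 'a::euclidean_space set \<Rightarrow> ('a \<Rightarrow> 'b::real_normed_vector) \<Rightarrow> bool" where
  "Ck_on 0 U f = continuous_on U f"
| "Ck_on (Suc k) U f = (f differentiable_on U \<and>
     (\<forall>i\<in>Basis. Ck_on k U (\<lambda>p. frechet_derivative f (at p) i)))"

definition smooth_on :: "'a::euclidean_space set \<Rightarrow> ('a \<Rightarrow> 'b::real_normed_vector) \<Rightarrow> bool" where
  "smooth_on U f \<longleftrightarrow> (\<forall>k. Ck_on k U f)"

definition ip :: "real^4 \<Rightarrow> real^4 \<Rightarrow> real" where
  "ip w z = w$1 * z$1 + w$2 * z$2 - w$3 * z$3 - w$4 * z$4"

definition Du :: "(real \<times> real \<Rightarrow> 'b::real_normed_vector) \<Rightarrow> real \<times> real \<Rightarrow> 'b" where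
  "Du f p = frechet_derivative f (at p) (1, 0)"

definition Dv :: "(real \<times> real \<Rightarrow> 'b::real_normed_vector) \<Rightarrow> real \<times> real \<Rightarrow> 'b" where
  "Dv f p = frechet_derivative f (at p) (0, 1)"

definition g11 :: "(real \<times> real \<Rightarrow> real^4) \<Rightarrow> real \<times> real \<Rightarrow> real" where
  "g11 x p = ip (Du x p) (Du x p)"
definition g12 :: "(real \<times> real \<Rightarrow> real^4) \<Rightarrow> real \<times> real \<Rightarrow> real" where
  "g12 x p = ip (Du x p) (Dv x p)"
definition g22 :: "(real \<times> real \<Rightarrow> real^4) \<Rightarrow> real \<times> real \<Rightarrow> real" where
  "g22 x p = ip (Dv x p) (Dv x p)"
definition gdet :: "(real \<times> real \<Rightarrow> real^4) \<Rightarrow> real \<times> real \<Rightarrow> real" where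
  "gdet x p = g11 x p * g22 x p - (g12 x p)^2"

definition gi11 :: "(real \<times> real \<Rightarrow> real^4) \<Rightarrow> real \<times> real \<Rightarrow> real" where
  "gi11 x p = g22 x p / gdet x p"
definition gi12 :: "(real \<times> real \<Rightarrow> real^4) \<Rightarrow> real \<times> real \<Rightarrow> real" where
  "gi12 x p = - g12 x p / gdet x p"
definition gi22 :: "(real \<times> real \<Rightarrow> real^4) \<Rightarrow> real \<times> real \<Rightarrow> real" where
  "gi22 x p = g11 x p / gdet x p"

text \<open>A Lorentz surface patch: smooth immersion of an open parameter domain whose
  induced metric has signature (1,1) (equivalently, negative determinant).\<close>
definition lorentz_surface :: "(real \<times> real \<Rightarrow> real^4) \<Rightarrow> (real \<times> real) set \<Rightarrow> bool" where
  "lorentz_surface x U \<longleftrightarrow> open U \<and> smooth_on U x \<and>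
     (\<forall>p\<in>U. (\<forall>a b. a *\<^sub>R Du x p + b *\<^sub>R Dv x p = 0 \<longrightarrow> a = 0 \<and> b = 0) \<and> gdet x p < 0)"

definition tanp :: "(real \<times> real \<Rightarrow> real^4) \<Rightarrow> real \<times> real \<Rightarrow> real^4 \<Rightarrow> real^4" where
  "tanp x p w =
     (gi11 x p * ip w (Du x p) + gi12 x p * ip w (Dv x p)) *\<^sub>R Du x p +
     (gi12 x p * ip w (Du x p) + gi22 x p * ip w (Dv x p)) *\<^sub>R Dv x p"

definition norp :: "(real \<times> real \<Rightarrow> real^4) \<Rightarrow> real \<times> real \<Rightarrow> real^4 \<Rightarrow> real^4" where
  "norp x p w = w - tanp x p w"

text \<open>Second fundamental form in coordinates: h_ij = (x_ij)^normal.\<close>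
definition h11 :: "(real \<times> real \<Rightarrow> real^4) \<Rightarrow> real \<times> real \<Rightarrow> real^4" where
  "h11 x p = norp x p (Du (Du x) p)"
definition h12 :: "(real \<times> real \<Rightarrow> real^4) \<Rightarrow> real \<times> real \<Rightarrow> real^4" where
  "h12 x p = norp x p (Dv (Du x) p)"
definition h22 :: "(real \<times> real \<Rightarrow> real^4) \<Rightarrow> real \<times> real \<Rightarrow> real^4" where
  "h22 x p = norp x p (Dv (Dv x) p)"

definition meancurv :: "(real \<times> real \<Rightarrow> real^4) \<Rightarrow> real \<times> real \<Rightarrow> real^4" where
  "meancurv x p = (1/2) *\<^sub>R (gi11 x p *\<^sub>R h11 x p + (2 * gi12 x p) *\<^sub>R h12 x p
                              + gi22 x p *\<^sub>R h22 x p)"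

text \<open>Normal connection D along the coordinate fields: D_{x_u} xi = (xi_u)^normal.\<close>
definition Dnu :: "(real \<times> real \<Rightarrow> real^4) \<Rightarrow> (real \<times> real \<Rightarrow> real^4) \<Rightarrow> real \<times> real \<Rightarrow> real^4" where
  "Dnu x \<xi> p = norp x p (Du \<xi> p)"
definition Dnv :: "(real \<times> real \<Rightarrow> real^4) \<Rightarrow> (real \<times> real \<Rightarrow> real^4) \<Rightarrow> real \<times> real \<Rightarrow> real^4" where
  "Dnv x \<xi> p = norp x p (Dv \<xi> p)"

text \<open>Curvature of the normal connection: R^D(x_u,x_v) xi = D_u D_v xi - D_v D_u xi
  (the coordinate fields commute, so no bracket term).\<close>
definition RD :: "(real \<times> real \<Rightarrow> real^4) \<Rightarrow> (real \<times> real \<Rightarrow> real^4) \<Rightarrow> real \<times> real \<Rightarrow> real^4" where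
  "RD x \<xi> p = Dnu x (Dnv x \<xi>) p - Dnv x (Dnu x \<xi>) p"

definition normal_field :: "(real \<times> real \<Rightarrow> real^4) \<Rightarrow> (real \<times> real) set \<Rightarrow> (real \<times> real \<Rightarrow> real^4) \<Rightarrow> bool" where
  "normal_field x U \<xi> \<longleftrightarrow> smooth_on U \<xi> \<and> (\<forall>p\<in>U. norp x p (\<xi> p) = \<xi> p)"

definition quasi_minimal :: "(real \<times> real \<Rightarrow> real^4) \<Rightarrow> (real \<times> real) set \<Rightarrow> bool" where
  "quasi_minimal x U \<longleftrightarrow> (\<forall>p\<in>U. meancurv x p \<noteq> 0 \<and> ip (meancurv x p) (meancurv x p) = 0)"

definition parallel_mean_curvature :: "(real \<times> real \<Rightarrow> real^4) \<Rightarrow> (real \<times> real) set \<Rightarrow> bool" where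
  "parallel_mean_curvature x U \<longleftrightarrow>
     (\<forall>p\<in>U. Dnu x (meancurv x) p = 0 \<and> Dnv x (meancurv x) p = 0)"

definition flat_normal_connection :: "(real \<times> real \<Rightarrow> real^4) \<Rightarrow> (real \<times> real) set \<Rightarrow> bool" where
  "flat_normal_connection x U \<longleftrightarrow>
     (\<forall>\<xi>. normal_field x U \<xi> \<longrightarrow> (\<forall>p\<in>U. RD x \<xi> p = 0))"

end

theory Submission
  imports Defs
begin



lemma fd_cong:
  assumes "open U" "p \<in> U" "\<And>q. q \<in> U \<Longrightarrow> f q = g q"
  shows "frechet_derivative f (at p) = frechet_derivative g (at p)"
proof -
  have "\<And>f'. (f has_derivative f') (at p) = (g has_derivative f') (at p)"
    using assms has_derivative_transform_within_open[of f _ p UNIV U g]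
      has_derivative_transform_within_open[of g _ p UNIV U f] by auto
  then show ?thesis unfolding frechet_derivative_def by simp
qed

lemma diffble_cong:
  assumes "open U" "p \<in> U" "\<And>q. q \<in> U \<Longrightarrow> f q = g q" "f differentiable (at p)"
  shows "g differentiable (at p)"
proof -
  obtain f' where "(f has_derivative f') (at p)" using assms(4) differentiable_def by blast
  then have "(g has_derivative f') (at p)"
    by (rule has_derivative_transform_within_open[OF _ assms(1,2)]) (simp add: assms(3))
  then show ?thesis using differentiable_def by blast
qed

lemma Ck_cong:
  assumes "open U" "\<And>p. p \<in> U \<Longrightarrow> f p = g p"
  shows "Ck_on k U f = Ck_on k U g"
  using assms(2)
proof (induction k arbitrary: f g)
  case 0
  have "continuous_on U f = continuous_on U g" by (rule continuous_on_cong[OF refl]) (rule 0)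
  then show ?case by simp
next
  case (Suc k)
  have d: "f differentiable_on U \<longleftrightarrow> g differentiable_on U"
    unfolding differentiable_on_eq_differentiable_at[OF assms(1)]
  proof
    assume "\<forall>x\<in>U. f differentiable at x"
    then show "\<forall>x\<in>U. g differentiable at x" using diffble_cong[OF assms(1), of _ f g] Suc.prems by blast
  next
    assume "\<forall>x\<in>U. g differentiable at x"
    then show "\<forall>x\<in>U. f differentiable at x" using diffble_cong[OF assms(1), of _ g f] Suc.prems by simp
  qed
  have "\<And>i. Ck_on k U (\<lambda>p. frechet_derivative f (at p) i) = Ck_on k U (\<lambda>p. frechet_derivative g (at p) i)"
  proof (rule Suc.IH)
    fix i p assume "p \<in> U"
    then show "frechet_derivative f (at p) i = frechet_derivative g (at p) i"
      using fd_cong[OF assms(1) \<open>p \<in> U\<close> Suc.prems] by simp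
  qed
  then show ?case unfolding Ck_on.simps(2) using d by (simp only:)
qed

lemma Ck_mono: "Ck_on (Suc k) U f \<Longrightarrow> Ck_on k U f"
proof (induction k arbitrary: f)
  case 0
  then show ?case by (simp add: differentiable_imp_continuous_on)
next
  case (Suc k)
  from Suc.prems have a: "f differentiable_on U" and b: "\<forall>i\<in>Basis. Ck_on (Suc k) U (\<lambda>p. frechet_derivative f (at p) i)"
    unfolding Ck_on.simps(2)[of "Suc k"] by blast+
  have "\<forall>i\<in>Basis. Ck_on k U (\<lambda>p. frechet_derivative f (at p) i)"
  proof
    fix i :: 'a assume "i \<in> Basis"
    then show "Ck_on k U (\<lambda>p. frechet_derivative f (at p) i)" using b Suc.IH by blast
  qed
  then show ?case unfolding Ck_on.simps(2)[of k] using a by (simp only:)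
qed

lemma Ck_const: "Ck_on k U (\<lambda>p. c)"
proof (induction k arbitrary: c)
  case 0
  then show ?case by simp
next
  case (Suc k)
  then show ?case by simp
qed

lemma Ck_diffble: "open U \<Longrightarrow> p \<in> U \<Longrightarrow> Ck_on (Suc k) U f \<Longrightarrow> f differentiable (at p)"
  by (simp add: differentiable_on_eq_differentiable_at)

lemma fd_add:
  fixes f g :: "'a::real_normed_vector \<Rightarrow> 'b::real_normed_vector"
  assumes "f differentiable (at p)" "g differentiable (at p)"
  shows "frechet_derivative (\<lambda>q. f q + g q) (at p) h = frechet_derivative f (at p) h + frechet_derivative g (at p) h"
proof -
  have "((\<lambda>q. f q + g q) has_derivative (\<lambda>h. frechet_derivative f (at p) h + frechet_derivative g (at p) h)) (at p)"
    by (rule has_derivative_add[OF assms(1)[unfolded frechet_derivative_works] assms(2)[unfolded frechet_derivative_works]])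
  from frechet_derivative_at[OF this, symmetric] show ?thesis by simp
qed

lemma fd_bil:
  assumes "bounded_bilinear pr" "f differentiable (at p)" "g differentiable (at p)"
  shows "frechet_derivative (\<lambda>q. pr (f q) (g q)) (at p) h =
     pr (f p) (frechet_derivative g (at p) h) + pr (frechet_derivative f (at p) h) (g p)"
proof -
  have "((\<lambda>q. pr (f q) (g q)) has_derivative
     (\<lambda>h. pr (f p) (frechet_derivative g (at p) h) + pr (frechet_derivative f (at p) h) (g p))) (at p)"
    using bounded_bilinear.FDERIV[OF assms(1) assms(2)[unfolded frechet_derivative_works]
       assms(3)[unfolded frechet_derivative_works]] .
  from frechet_derivative_at[OF this, symmetric] show ?thesis by simp
qed

lemma diffble_bil:
  assumes "bounded_bilinear pr" "f differentiable (at p)" "g differentiable (at p)"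
  shows "(\<lambda>q. pr (f q) (g q)) differentiable (at p)"
  using bounded_bilinear.FDERIV[OF assms(1) assms(2)[unfolded frechet_derivative_works]
       assms(3)[unfolded frechet_derivative_works]] unfolding differentiable_def by blast

lemma fd_inv:
  fixes f :: "'a::real_normed_vector \<Rightarrow> real"
  assumes "f differentiable (at p)" "f p \<noteq> 0"
  shows "frechet_derivative (\<lambda>q. inverse (f q)) (at p) h =
     - (inverse (f p) * frechet_derivative f (at p) h * inverse (f p))"
proof -
  have "((\<lambda>q. inverse (f q)) has_derivative
     (\<lambda>h. - (inverse (f p) * frechet_derivative f (at p) h * inverse (f p)))) (at p)"
    by (rule Deriv.has_derivative_inverse[OF assms(2) assms(1)[unfolded frechet_derivative_works]])
  from frechet_derivative_at[OF this, symmetric] show ?thesis by simp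
qed

lemma Ck_add:
  assumes "open U"
  shows "Ck_on k U f \<Longrightarrow> Ck_on k U g \<Longrightarrow> Ck_on k U (\<lambda>p. f p + g p)"
proof (induction k arbitrary: f g)
  case 0
  then show ?case by (simp add: continuous_on_add)
next
  case (Suc k)
  have "\<And>i. i \<in> Basis \<Longrightarrow> Ck_on k U (\<lambda>p. frechet_derivative (\<lambda>q. f q + g q) (at p) i)"
  proof -
    fix i :: 'a assume i: "i \<in> Basis"
    have c: "Ck_on k U (\<lambda>p. frechet_derivative f (at p) i + frechet_derivative g (at p) i)"
      using Suc.prems i by (intro Suc.IH) auto
    have e: "\<And>p. p \<in> U \<Longrightarrow> frechet_derivative (\<lambda>q. f q + g q) (at p) i =
        frechet_derivative f (at p) i + frechet_derivative g (at p) i"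
    proof -
      fix p assume p: "p \<in> U"
      show "?thesis p"
        by (rule fd_add[OF Ck_diffble[OF assms p Suc.prems(1)] Ck_diffble[OF assms p Suc.prems(2)]])
    qed
    show "?thesis i" using Ck_cong[OF assms e] c by (simp only:)
  qed
  moreover have "(\<lambda>p. f p + g p) differentiable_on U"
    using Suc.prems by (simp add: differentiable_on_add)
  ultimately show ?case unfolding Ck_on.simps(2) by blast
qed

lemma Ck_bil:
  assumes "open U" "bounded_bilinear pr"
  shows "Ck_on k U f \<Longrightarrow> Ck_on k U g \<Longrightarrow> Ck_on k U (\<lambda>p. pr (f p) (g p))"
proof (induction k arbitrary: f g)
  case 0
  then show ?case using bounded_bilinear.continuous_on[OF assms(2)] by (simp only: Ck_on.simps(1))
next
  case (Suc k)
  have "\<And>i. i \<in> Basis \<Longrightarrow> Ck_on k U (\<lambda>p. frechet_derivative (\<lambda>q. pr (f q) (g q)) (at p) i)"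
  proof -
    fix i :: 'a assume i: "i \<in> Basis"
    have c: "Ck_on k U (\<lambda>p. pr (f p) (frechet_derivative g (at p) i) + pr (frechet_derivative f (at p) i) (g p))"
    proof (rule Ck_add[OF assms(1)])
      have "Ck_on k U f" "Ck_on k U g" using Suc.prems Ck_mono by blast+
      moreover have "Ck_on k U (\<lambda>p. frechet_derivative f (at p) i)" "Ck_on k U (\<lambda>p. frechet_derivative g (at p) i)"
        using Suc.prems i unfolding Ck_on.simps(2) by blast+
      ultimately show "Ck_on k U (\<lambda>p. pr (f p) (frechet_derivative g (at p) i))"
          "Ck_on k U (\<lambda>p. pr (frechet_derivative f (at p) i) (g p))" using Suc.IH by blast+
    qed
    have e: "\<And>p. p \<in> U \<Longrightarrow> frechet_derivative (\<lambda>q. pr (f q) (g q)) (at p) i =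
        pr (f p) (frechet_derivative g (at p) i) + pr (frechet_derivative f (at p) i) (g p)"
    proof -
      fix p assume p: "p \<in> U"
      show "?thesis p"
        by (rule fd_bil[OF assms(2) Ck_diffble[OF assms(1) p Suc.prems(1)] Ck_diffble[OF assms(1) p Suc.prems(2)]])
    qed
    show "?thesis i" using Ck_cong[OF assms(1) e] c by (simp only:)
  qed
  moreover have "(\<lambda>p. pr (f p) (g p)) differentiable_on U"
    unfolding differentiable_on_eq_differentiable_at[OF assms(1)]
  proof
    fix p assume p: "p \<in> U"
    show "(\<lambda>p. pr (f p) (g p)) differentiable at p"
      by (rule diffble_bil[OF assms(2) Ck_diffble[OF assms(1) p Suc.prems(1)] Ck_diffble[OF assms(1) p Suc.prems(2)]])
  qed
  ultimately show ?case unfolding Ck_on.simps(2) by blast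
qed

lemma Ck_uminus:
  assumes "open U" "Ck_on k U f"
  shows "Ck_on k U (\<lambda>p. - f p)"
proof -
  have "Ck_on k U (\<lambda>p. scaleR (-1) (f p))"
    by (rule Ck_bil[OF assms(1) bounded_bilinear_scaleR Ck_const assms(2)])
  then show ?thesis by simp
qed

lemma Ck_diff:
  assumes "open U" "Ck_on k U f" "Ck_on k U g"
  shows "Ck_on k U (\<lambda>p. f p - g p)"
  using Ck_add[OF assms(1) assms(2) Ck_uminus[OF assms(1,3)]] by simp

lemma Ck_inv:
  fixes f :: "'a::euclidean_space \<Rightarrow> real"
  assumes "open U"
  shows "(\<And>p. p \<in> U \<Longrightarrow> f p \<noteq> 0) \<Longrightarrow> Ck_on k U f \<Longrightarrow> Ck_on k U (\<lambda>p. inverse (f p))"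
proof (induction k arbitrary: f)
  case 0
  then show ?case by (auto intro!: continuous_on_inverse)
next
  case (Suc k)
  have fk: "Ck_on k U f" using Suc.prems(2) Ck_mono by blast
  have ik: "Ck_on k U (\<lambda>p. inverse (f p))" using Suc.IH[OF Suc.prems(1) fk] .
  have "\<And>i. i \<in> Basis \<Longrightarrow> Ck_on k U (\<lambda>p. frechet_derivative (\<lambda>q. inverse (f q)) (at p) i)"
  proof -
    fix i :: 'a assume i: "i \<in> Basis"
    have di: "Ck_on k U (\<lambda>p. frechet_derivative f (at p) i)" using Suc.prems(2) i by simp
    have c: "Ck_on k U (\<lambda>p. - (inverse (f p) * frechet_derivative f (at p) i * inverse (f p)))"
      by (intro Ck_uminus[OF assms(1)] Ck_bil[OF assms(1) bounded_bilinear_mult] ik di)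
    have e: "\<And>p. p \<in> U \<Longrightarrow> frechet_derivative (\<lambda>q. inverse (f q)) (at p) i =
        - (inverse (f p) * frechet_derivative f (at p) i * inverse (f p))"
    proof -
      fix p assume p: "p \<in> U"
      show "?thesis p" by (rule fd_inv[OF Ck_diffble[OF assms(1) p Suc.prems(2)] Suc.prems(1)[OF p]])
    qed
    show "?thesis i" using Ck_cong[OF assms(1) e] c by (simp only:)
  qed
  moreover have "(\<lambda>p. inverse (f p)) differentiable_on U"
    unfolding differentiable_on_eq_differentiable_at[OF assms(1)]
  proof
    fix p assume p: "p \<in> U"
    show "(\<lambda>p. inverse (f p)) differentiable at p"
      by (rule differentiable_inverse[OF Ck_diffble[OF assms(1) p Suc.prems(2)] Suc.prems(1)[OF p]])
  qed
  ultimately show ?case unfolding Ck_on.simps(2) by blast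
qed




lemma ip_sym: "ip w z = ip z w" by (simp add: ip_def algebra_simps)
lemma ip_add_left: "ip (a + b) c = ip a c + ip b c" by (simp add: ip_def algebra_simps)
lemma ip_diff_left: "ip (a - b) c = ip a c - ip b c" by (simp add: ip_def algebra_simps)
lemma ip_scale_left: "ip (r *\<^sub>R a) c = r * ip a c" by (simp add: ip_def algebra_simps)
lemma ip_add_right: "ip c (a + b) = ip c a + ip c b" by (simp add: ip_def algebra_simps)
lemma ip_diff_right: "ip c (a - b) = ip c a - ip c b" by (simp add: ip_def algebra_simps)
lemma ip_scale_right: "ip c (r *\<^sub>R a) = r * ip c a" by (simp add: ip_def algebra_simps)
lemma ip_zero_left: "ip 0 c = 0" by (simp add: ip_def)
lemma ip_zero_right: "ip c 0 = 0" by (simp add: ip_def)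
lemma ip_uminus_left: "ip (- a) c = - ip a c" by (simp add: ip_def algebra_simps)
lemma ip_uminus_right: "ip c (- a) = - ip c a" by (simp add: ip_def algebra_simps)

lemmas ip_lin = ip_add_left ip_diff_left ip_scale_left ip_add_right ip_diff_right ip_scale_right
  ip_zero_left ip_zero_right ip_uminus_left ip_uminus_right

lemma bilinear_ip: "bilinear ip"
  unfolding bilinear_def
  by (auto intro!: linearI simp: ip_lin)

lemma bb_ip: "bounded_bilinear ip"
  using bilinear_ip bilinear_conv_bounded_bilinear by blast

lemma smooth_const: "smooth_on U (\<lambda>p. c)"
  by (simp add: smooth_on_def Ck_const)

lemma smooth_add: "open U \<Longrightarrow> smooth_on U f \<Longrightarrow> smooth_on U g \<Longrightarrow> smooth_on U (\<lambda>p. f p + g p)"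
  by (simp add: smooth_on_def Ck_add)

lemma smooth_diff: "open U \<Longrightarrow> smooth_on U f \<Longrightarrow> smooth_on U g \<Longrightarrow> smooth_on U (\<lambda>p. f p - g p)"
  by (simp add: smooth_on_def Ck_diff)

lemma smooth_uminus: "open U \<Longrightarrow> smooth_on U f \<Longrightarrow> smooth_on U (\<lambda>p. - f p)"
  by (simp add: smooth_on_def Ck_uminus)

lemma smooth_bil: "open U \<Longrightarrow> bounded_bilinear pr \<Longrightarrow> smooth_on U f \<Longrightarrow> smooth_on U g \<Longrightarrow>
   smooth_on U (\<lambda>p. pr (f p) (g p))"
  unfolding smooth_on_def by (metis Ck_bil)

lemma smooth_mult: fixes f g :: "'a::euclidean_space \<Rightarrow> 'b::real_normed_algebra" assumes "open U" "smooth_on U f" "smooth_on U g" shows "smooth_on U (\<lambda>p. f p * g p)"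
  by (rule smooth_bil[OF assms(1) bounded_bilinear_mult assms(2,3)])

lemma smooth_scaleR: fixes f :: "'a::euclidean_space \<Rightarrow> real" and g :: "'a \<Rightarrow> 'b::real_normed_vector" assumes "open U" "smooth_on U f" "smooth_on U g" shows "smooth_on U (\<lambda>p. f p *\<^sub>R g p)"
  by (rule smooth_bil[OF assms(1) bounded_bilinear_scaleR assms(2,3)])

lemma smooth_ip: fixes f g :: "'a::euclidean_space \<Rightarrow> real^4" assumes "open U" "smooth_on U f" "smooth_on U g" shows "smooth_on U (\<lambda>p. ip (f p) (g p))"
  by (rule smooth_bil[OF assms(1) bb_ip assms(2,3)])

lemma smooth_inv:
  fixes f :: "'a::euclidean_space \<Rightarrow> real"
  shows "open U \<Longrightarrow> (\<And>p. p \<in> U \<Longrightarrow> f p \<noteq> 0) \<Longrightarrow> smooth_on U f \<Longrightarrow> smooth_on U (\<lambda>p. inverse (f p))"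
  unfolding smooth_on_def by (metis Ck_inv)

lemma smooth_divide:
  fixes f :: "'a::euclidean_space \<Rightarrow> real"
  assumes "open U" "\<And>p. p \<in> U \<Longrightarrow> g p \<noteq> 0" "smooth_on U f" "smooth_on U g"
  shows "smooth_on U (\<lambda>p. f p / g p)"
  using smooth_mult[OF assms(1,3) smooth_inv[OF assms(1,2,4)]] by (simp add: divide_inverse)

lemma smooth_partial:
  assumes "smooth_on U f" "i \<in> Basis"
  shows "smooth_on U (\<lambda>p. frechet_derivative f (at p) i)"
  unfolding smooth_on_def
proof
  fix k
  have "Ck_on (Suc k) U f" using assms(1) smooth_on_def by blast
  then show "Ck_on k U (\<lambda>p. frechet_derivative f (at p) i)" using assms(2) by simp
qed

lemma smooth_Du: "smooth_on U f \<Longrightarrow> smooth_on U (Du f)"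
  using smooth_partial[of U f "(1,0)"] unfolding Du_def by (simp add: Basis_prod_def)

lemma smooth_Dv: "smooth_on U f \<Longrightarrow> smooth_on U (Dv f)"
  using smooth_partial[of U f "(0,1)"] unfolding Dv_def by (simp add: Basis_prod_def)

lemma smooth_Ck: "smooth_on U f \<Longrightarrow> Ck_on k U f"
  by (simp add: smooth_on_def)

lemma smooth_diffble: "open U \<Longrightarrow> p \<in> U \<Longrightarrow> smooth_on U f \<Longrightarrow> f differentiable (at p)"
  by (rule Ck_diffble[OF _ _ smooth_Ck[of U f "Suc 0"]])




lemma PD1:
  fixes g :: "real \<times> real \<Rightarrow> real"
  assumes "g differentiable (at (s,t))"
  shows "((\<lambda>r. g (r,t)) has_real_derivative Du g (s,t)) (at s)"
proof -
  let ?L = "frechet_derivative g (at (s,t))"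
  have D: "(g has_derivative ?L) (at (s,t))" using assms frechet_derivative_works by blast
  have lin: "linear ?L" using assms linear_frechet_derivative by blast
  have P: "((\<lambda>r. (r,t)) has_derivative (\<lambda>h. (h,0))) (at s)"
    by (auto intro!: derivative_eq_intros)
  have C: "((\<lambda>r. g (r,t)) has_derivative (\<lambda>h. ?L (h,0))) (at s)"
    by (rule has_derivative_compose[OF P D])
  have "\<And>h. ?L (h,0) = Du g (s,t) * h"
  proof -
    fix h :: real
    have "?L (h *\<^sub>R (1,0)) = h *\<^sub>R ?L (1,0)" using lin by (rule linear_cmul)
    then show "?L (h,0) = Du g (s,t) * h" by (simp add: Du_def)
  qed
  then have "((\<lambda>r. g (r,t)) has_derivative (*) (Du g (s,t))) (at s)" using C by simp
  then show ?thesis by (simp add: has_field_derivative_def)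
qed

lemma PD2:
  fixes g :: "real \<times> real \<Rightarrow> real"
  assumes "g differentiable (at (s,t))"
  shows "((\<lambda>r. g (s,r)) has_real_derivative Dv g (s,t)) (at t)"
proof -
  let ?L = "frechet_derivative g (at (s,t))"
  have D: "(g has_derivative ?L) (at (s,t))" using assms frechet_derivative_works by blast
  have lin: "linear ?L" using assms linear_frechet_derivative by blast
  have P: "((\<lambda>r. (s,r)) has_derivative (\<lambda>h. (0,h))) (at t)"
    by (auto intro!: derivative_eq_intros)
  have C: "((\<lambda>r. g (s,r)) has_derivative (\<lambda>h. ?L (0,h))) (at t)"
    by (rule has_derivative_compose[OF P D])
  have "\<And>h. ?L (0,h) = Dv g (s,t) * h"
  proof -
    fix h :: real
    have "?L (h *\<^sub>R (0,1)) = h *\<^sub>R ?L (0,1)" using lin by (rule linear_cmul)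
    then show "?L (0,h) = Dv g (s,t) * h" by (simp add: Dv_def)
  qed
  then have "((\<lambda>r. g (s,r)) has_derivative (*) (Dv g (s,t))) (at t)" using C by simp
  then show ?thesis by (simp add: has_field_derivative_def)
qed

lemma schwarz:
  fixes f :: "real \<times> real \<Rightarrow> real"
  assumes U: "open U" and pU: "p \<in> U" and sm: "smooth_on U f"
  shows "Dv (Du f) p = Du (Dv f) p"
proof (rule ccontr)
  assume ne: "Dv (Du f) p \<noteq> Du (Dv f) p"
  obtain a b where p: "p = (a,b)" by (cases p)
  define A where "A = Dv (Du f) p"
  define B where "B = Du (Dv f) p"
  define e where "e = \<bar>A - B\<bar> / 2"
  have e: "e > 0" using ne by (simp add: e_def A_def B_def)
  have sDu: "smooth_on U (Du f)" and sDv: "smooth_on U (Dv f)" using sm smooth_Du smooth_Dv by blast+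
  have df: "\<And>q. q \<in> U \<Longrightarrow> f differentiable (at q)" using smooth_diffble[OF U _ sm] by blast
  have dDu: "\<And>q. q \<in> U \<Longrightarrow> Du f differentiable (at q)" using smooth_diffble[OF U _ sDu] by blast
  have dDv: "\<And>q. q \<in> U \<Longrightarrow> Dv f differentiable (at q)" using smooth_diffble[OF U _ sDv] by blast
  have c1: "isCont (Dv (Du f)) p"
    using smooth_Ck[OF smooth_Dv[OF sDu], of 0] U pU continuous_on_eq_continuous_at by auto
  have c2: "isCont (Du (Dv f)) p"
    using smooth_Ck[OF smooth_Du[OF sDv], of 0] U pU continuous_on_eq_continuous_at by auto
  obtain d1 where d1: "d1 > 0" "\<And>q. dist q p < d1 \<Longrightarrow> dist (Dv (Du f) q) A < e"
    using c1 e unfolding continuous_at_eps_delta A_def by blast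
  obtain d2 where d2: "d2 > 0" "\<And>q. dist q p < d2 \<Longrightarrow> dist (Du (Dv f) q) B < e"
    using c2 e unfolding continuous_at_eps_delta B_def by blast
  obtain d0 where d0: "d0 > 0" "ball p d0 \<subseteq> U" using U pU open_contains_ball by blast
  define m where "m = min d0 (min d1 d2)"
  have m: "m > 0" using d0 d1 d2 by (simp add: m_def)
  define h where "h = m / 3"
  have h: "h > 0" using m by (simp add: h_def)
  have h2: "2 * h < m" using m by (simp add: h_def)
  have near: "\<And>r t. a \<le> r \<Longrightarrow> r \<le> a + h \<Longrightarrow> b \<le> t \<Longrightarrow> t \<le> b + h \<Longrightarrow>
      dist (r,t) p < min d0 (min d1 d2)"
  proof -
    fix r t assume r: "a \<le> r" "r \<le> a + h" and t: "b \<le> t" "t \<le> b + h"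
    have "dist (r,t) (a,b) \<le> dist (r,t) (r,b) + dist (r,b) (a,b)" by (rule dist_triangle)
    also have "dist (r,t) (r,b) = \<bar>t - b\<bar>" by (simp add: dist_Pair_Pair dist_real_def)
    also have "dist (r,b) (a,b) = \<bar>r - a\<bar>" by (simp add: dist_Pair_Pair dist_real_def)
    finally have "dist (r,t) (a,b) \<le> \<bar>t - b\<bar> + \<bar>r - a\<bar>" .
    also have "\<dots> \<le> 2 * h" using r t by simp
    also have "\<dots> < min d0 (min d1 d2)" using h2 by (simp add: m_def)
    finally show "dist (r,t) p < min d0 (min d1 d2)" using p by simp
  qed
  have inU: "\<And>r t. a \<le> r \<Longrightarrow> r \<le> a + h \<Longrightarrow> b \<le> t \<Longrightarrow> t \<le> b + h \<Longrightarrow> (r,t) \<in> U"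
  proof -
    fix r t assume "a \<le> r" "r \<le> a + h" "b \<le> t" "t \<le> b + h"
    then have "dist (r,t) p < d0" using near by force
    then show "(r,t) \<in> U" using d0 by (auto simp: dist_commute)
  qed
  define \<Delta> where "\<Delta> = f (a+h,b+h) - f (a+h,b) - f (a,b+h) + f (a,b)"
  obtain r1 where r1: "a < r1" "r1 < a + h"
    "(f (a+h,b+h) - f (a+h,b)) - (f (a,b+h) - f (a,b)) = ((a+h) - a) * (Du f (r1,b+h) - Du f (r1,b))"
  proof -
    have "\<And>r. a \<le> r \<Longrightarrow> r \<le> a + h \<Longrightarrow>
       ((\<lambda>r. f (r,b+h) - f (r,b)) has_real_derivative (Du f (r,b+h) - Du f (r,b))) (at r)"
      using PD1 df inU h by (intro DERIV_diff) auto
    from MVT2[of a "a+h", OF _ this] h that show ?thesis by auto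
  qed
  obtain t1 where t1: "b < t1" "t1 < b + h"
    "Du f (r1,b+h) - Du f (r1,b) = ((b+h) - b) * Dv (Du f) (r1,t1)"
  proof -
    have "\<And>t. b \<le> t \<Longrightarrow> t \<le> b + h \<Longrightarrow>
       ((\<lambda>t. Du f (r1,t)) has_real_derivative Dv (Du f) (r1,t)) (at t)"
      using PD2 dDu inU r1 by auto
    from MVT2[of b "b+h", OF _ this] h that show ?thesis by auto
  qed
  obtain t2 where t2: "b < t2" "t2 < b + h"
    "(f (a+h,b+h) - f (a,b+h)) - (f (a+h,b) - f (a,b)) = ((b+h) - b) * (Dv f (a+h,t2) - Dv f (a,t2))"
  proof -
    have "\<And>t. b \<le> t \<Longrightarrow> t \<le> b + h \<Longrightarrow>
       ((\<lambda>t. f (a+h,t) - f (a,t)) has_real_derivative (Dv f (a+h,t) - Dv f (a,t))) (at t)"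
      using PD2 df inU h by (intro DERIV_diff) auto
    from MVT2[of b "b+h", OF _ this] h that show ?thesis by auto
  qed
  obtain r2 where r2: "a < r2" "r2 < a + h"
    "Dv f (a+h,t2) - Dv f (a,t2) = ((a+h) - a) * Du (Dv f) (r2,t2)"
  proof -
    have "\<And>r. a \<le> r \<Longrightarrow> r \<le> a + h \<Longrightarrow>
       ((\<lambda>r. Dv f (r,t2)) has_real_derivative Du (Dv f) (r,t2)) (at r)"
      using PD1 dDv inU t2 by auto
    from MVT2[of a "a+h", OF _ this] h that show ?thesis by auto
  qed
  have "h * (h * Dv (Du f) (r1,t1)) = h * (h * Du (Dv f) (r2,t2))"
    using r1(3) t1(3) t2(3) r2(3) by (simp add: algebra_simps)
  then have eq: "Dv (Du f) (r1,t1) = Du (Dv f) (r2,t2)" using h by simp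
  have "dist (r1,t1) p < d1" using near[of r1 t1] r1 t1 by force
  then have "\<bar>Dv (Du f) (r1,t1) - A\<bar> < e" using d1 by (simp add: dist_real_def)
  moreover have "dist (r2,t2) p < d2" using near[of r2 t2] r2 t2 by force
  then have "\<bar>Du (Dv f) (r2,t2) - B\<bar> < e" using d2 by (simp add: dist_real_def)
  ultimately have "\<bar>A - B\<bar> < 2 * e" using eq by linarith
  then show False by (simp add: e_def)
qed




lemma alg1: fixes a b c A B d :: real
  assumes "d = a*c - b^2" "d \<noteq> 0"
  shows "(c/d*A + (-b/d)*B)*a + ((-b/d)*A + a/d*B)*b = A"
    and "(c/d*A + (-b/d)*B)*b + ((-b/d)*A + a/d*B)*c = B"
proof -
  have "(c/d*A + (-b/d)*B)*a + ((-b/d)*A + a/d*B)*b = ((c*A - b*B)*a + (-b*A + a*B)*b)/d"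
    using assms(2) by (simp add: field_simps)
  also have "(c*A - b*B)*a + (-b*A + a*B)*b = A * d" unfolding assms(1) by (simp add: algebra_simps power2_eq_square)
  also have "A * d / d = A" using assms(2) by simp
  finally show "(c/d*A + (-b/d)*B)*a + ((-b/d)*A + a/d*B)*b = A" .
  have "(c/d*A + (-b/d)*B)*b + ((-b/d)*A + a/d*B)*c = ((c*A - b*B)*b + (-b*A + a*B)*c)/d"
    using assms(2) by (simp add: field_simps)
  also have "(c*A - b*B)*b + (-b*A + a*B)*c = B * d" unfolding assms(1) by (simp add: algebra_simps power2_eq_square)
  also have "B * d / d = B" using assms(2) by simp
  finally show "(c/d*A + (-b/d)*B)*b + ((-b/d)*A + a/d*B)*c = B" .
qed

lemma tanp_ip_u:
  assumes "gdet x p \<noteq> 0"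
  shows "ip (tanp x p w) (Du x p) = ip w (Du x p)"
proof -
  have s: "ip (Dv x p) (Du x p) = g12 x p" by (simp add: g12_def ip_sym)
  have "ip (tanp x p w) (Du x p) = (gi11 x p * ip w (Du x p) + gi12 x p * ip w (Dv x p)) * g11 x p
     + (gi12 x p * ip w (Du x p) + gi22 x p * ip w (Dv x p)) * g12 x p"
    by (simp add: tanp_def ip_lin g11_def s)
  also have "\<dots> = ip w (Du x p)"
    unfolding gi11_def gi12_def gi22_def by (rule alg1(1)[OF gdet_def assms])
  finally show ?thesis .
qed

lemma tanp_ip_v:
  assumes "gdet x p \<noteq> 0"
  shows "ip (tanp x p w) (Dv x p) = ip w (Dv x p)"
proof -
  have "ip (tanp x p w) (Dv x p) = (gi11 x p * ip w (Du x p) + gi12 x p * ip w (Dv x p)) * g12 x p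
     + (gi12 x p * ip w (Du x p) + gi22 x p * ip w (Dv x p)) * g22 x p"
    by (simp add: tanp_def ip_lin g12_def g22_def)
  also have "\<dots> = ip w (Dv x p)"
    unfolding gi11_def gi12_def gi22_def by (rule alg1(2)[OF gdet_def assms])
  finally show ?thesis .
qed

lemma norp_ip_u: "gdet x p \<noteq> 0 \<Longrightarrow> ip (norp x p w) (Du x p) = 0"
  by (simp add: norp_def ip_lin tanp_ip_u)

lemma norp_ip_v: "gdet x p \<noteq> 0 \<Longrightarrow> ip (norp x p w) (Dv x p) = 0"
  by (simp add: norp_def ip_lin tanp_ip_v)

lemma tanp_zero: "ip w (Du x p) = 0 \<Longrightarrow> ip w (Dv x p) = 0 \<Longrightarrow> tanp x p w = 0"
  by (simp add: tanp_def)

lemma normal_iff: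
  "gdet x p \<noteq> 0 \<Longrightarrow> norp x p n = n \<longleftrightarrow> (ip n (Du x p) = 0 \<and> ip n (Dv x p) = 0)"
  by (metis norp_ip_u norp_ip_v tanp_zero norp_def diff_zero)

lemma norp_idem: "gdet x p \<noteq> 0 \<Longrightarrow> norp x p (norp x p w) = norp x p w"
  using normal_iff norp_ip_u norp_ip_v by blast

lemma ip_tanp_normal:
  "ip n (Du x p) = 0 \<Longrightarrow> ip n (Dv x p) = 0 \<Longrightarrow> ip (tanp x p w) n = 0"
  by (simp add: tanp_def ip_lin ip_sym[of _ n])

lemma ip_norp_normal:
  assumes "gdet x p \<noteq> 0" "norp x p n = n"
  shows "ip (norp x p w) n = ip w n"
proof -
  have "ip n (Du x p) = 0" "ip n (Dv x p) = 0" using assms normal_iff by blast+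
  then show ?thesis by (simp add: norp_def ip_lin ip_tanp_normal)
qed

lemma tanp_add: "tanp x p (a + b) = tanp x p a + tanp x p b"
  by (simp add: tanp_def ip_lin algebra_simps)
lemma tanp_diff: "tanp x p (a - b) = tanp x p a - tanp x p b"
  by (simp add: tanp_def ip_lin algebra_simps)
lemma tanp_scale: "tanp x p (r *\<^sub>R a) = r *\<^sub>R tanp x p a"
  by (simp add: tanp_def ip_lin algebra_simps)
lemma norp_add: "norp x p (a + b) = norp x p a + norp x p b"
  by (simp add: norp_def tanp_add algebra_simps)
lemma norp_diff: "norp x p (a - b) = norp x p a - norp x p b"
  by (simp add: norp_def tanp_diff algebra_simps)
lemma norp_scale: "norp x p (r *\<^sub>R a) = r *\<^sub>R norp x p a"
  by (simp add: norp_def tanp_scale algebra_simps)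
lemma norp_zero: "norp x p 0 = 0"
  using norp_scale[of x p 0 0] by simp

lemma lor_open: "lorentz_surface x U \<Longrightarrow> open U" by (simp add: lorentz_surface_def)
lemma lor_smooth: "lorentz_surface x U \<Longrightarrow> smooth_on U x" by (simp add: lorentz_surface_def)
lemma lor_gdet: "lorentz_surface x U \<Longrightarrow> p \<in> U \<Longrightarrow> gdet x p \<noteq> 0"
  unfolding lorentz_surface_def by force
lemma lor_imm: "lorentz_surface x U \<Longrightarrow> p \<in> U \<Longrightarrow> a *\<^sub>R Du x p + b *\<^sub>R Dv x p = 0 \<Longrightarrow> a = 0 \<and> b = 0"
  unfolding lorentz_surface_def by blast

lemma smooth_norp:
  assumes L: "lorentz_surface x U" and sf: "smooth_on U f"
  shows "smooth_on U (\<lambda>q. norp x q (f q))"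
proof -
  have U: "open U" using L lor_open by blast
  have sx: "smooth_on U x" using L lor_smooth by blast
  have su: "smooth_on U (Du x)" and sv: "smooth_on U (Dv x)" using smooth_Du smooth_Dv sx by blast+
  have s11: "smooth_on U (g11 x)" unfolding g11_def[abs_def] by (rule smooth_ip[OF U su su])
  have s12: "smooth_on U (g12 x)" unfolding g12_def[abs_def] by (rule smooth_ip[OF U su sv])
  have s22: "smooth_on U (g22 x)" unfolding g22_def[abs_def] by (rule smooth_ip[OF U sv sv])
  have sd: "smooth_on U (gdet x)" unfolding gdet_def[abs_def] power2_eq_square
    by (intro smooth_diff smooth_mult U s11 s12 s22)
  have nz: "\<And>q. q \<in> U \<Longrightarrow> gdet x q \<noteq> 0" using L lor_gdet by blast
  have i11: "smooth_on U (gi11 x)" unfolding gi11_def[abs_def]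
    by (rule smooth_divide[OF U nz s22 sd])
  have i22: "smooth_on U (gi22 x)" unfolding gi22_def[abs_def]
    by (rule smooth_divide[OF U nz s11 sd])
  have i12: "smooth_on U (gi12 x)" unfolding gi12_def[abs_def]
    by (rule smooth_divide[OF U nz smooth_uminus[OF U s12] sd])
  have fu: "smooth_on U (\<lambda>q. ip (f q) (Du x q))" by (rule smooth_ip[OF U sf su])
  have fv: "smooth_on U (\<lambda>q. ip (f q) (Dv x q))" by (rule smooth_ip[OF U sf sv])
  show ?thesis unfolding norp_def tanp_def
    by (intro smooth_diff smooth_add smooth_scaleR smooth_mult U sf i11 i12 i22 fu fv su sv)
qed




definition Dd :: "real \<times> real \<Rightarrow> (real \<times> real \<Rightarrow> 'b::real_normed_vector) \<Rightarrow> real \<times> real \<Rightarrow> 'b" where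
  "Dd i f p = frechet_derivative f (at p) i"

definition Dn :: "(real \<times> real \<Rightarrow> real^4) \<Rightarrow> real \<times> real \<Rightarrow> (real \<times> real \<Rightarrow> real^4) \<Rightarrow> real \<times> real \<Rightarrow> real^4" where
  "Dn x i \<xi> p = norp x p (Dd i \<xi> p)"

lemma Du_Dd: "Du f = Dd (1,0) f" by (simp add: fun_eq_iff Du_def Dd_def)
lemma Dv_Dd: "Dv f = Dd (0,1) f" by (simp add: fun_eq_iff Dv_def Dd_def)
lemma Dnu_Dn: "Dnu x \<xi> = Dn x (1,0) \<xi>" by (simp add: fun_eq_iff Dnu_def Dn_def Du_Dd)
lemma Dnv_Dn: "Dnv x \<xi> = Dn x (0,1) \<xi>" by (simp add: fun_eq_iff Dnv_def Dn_def Dv_Dd)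

lemma smooth_Dd: "smooth_on U f \<Longrightarrow> i \<in> Basis \<Longrightarrow> smooth_on U (Dd i f)"
  using smooth_partial[of U f i] unfolding Dd_def[abs_def] by simp

lemma smooth_Dn: "lorentz_surface x U \<Longrightarrow> smooth_on U \<xi> \<Longrightarrow> i \<in> Basis \<Longrightarrow> smooth_on U (Dn x i \<xi>)"
  unfolding Dn_def[abs_def] by (rule smooth_norp) (auto intro: smooth_Dd)

lemma Dd_ip:
  fixes f g :: "real \<times> real \<Rightarrow> real^4"
  assumes "f differentiable (at p)" "g differentiable (at p)"
  shows "Dd i (\<lambda>q. ip (f q) (g q)) p = ip (f p) (Dd i g p) + ip (Dd i f p) (g p)"
  unfolding Dd_def by (rule fd_bil[OF bb_ip assms])

lemma Dd_add:
  fixes f g :: "real \<times> real \<Rightarrow> real"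
  assumes "f differentiable (at p)" "g differentiable (at p)"
  shows "Dd i (\<lambda>q. f q + g q) p = Dd i f p + Dd i g p"
  unfolding Dd_def by (rule fd_add[OF assms])

lemma Dd_cong:
  assumes "open U" "p \<in> U" "\<And>q. q \<in> U \<Longrightarrow> f q = g q"
  shows "Dd i f p = Dd i g p"
  unfolding Dd_def using fd_cong[OF assms] by simp

lemma second:
  assumes L: "lorentz_surface x U" and nx: "normal_field x U \<xi>" and ne: "normal_field x U \<eta>"
    and pU: "p \<in> U" and i: "i \<in> Basis" and j: "j \<in> Basis"
  shows "Dd j (Dd i (\<lambda>q. ip (\<xi> q) (\<eta> q))) p =
    ip (\<xi> p) (Dn x j (Dn x i \<eta>) p) + ip (Dn x j \<xi> p) (Dn x i \<eta> p)
    + (ip (Dn x i \<xi> p) (Dn x j \<eta> p) + ip (Dn x j (Dn x i \<xi>) p) (\<eta> p))"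
proof -
  have U: "open U" using L lor_open by blast
  have gd: "\<And>q. q \<in> U \<Longrightarrow> gdet x q \<noteq> 0" using L lor_gdet by blast
  have sx: "smooth_on U \<xi>" and se: "smooth_on U \<eta>" using nx ne normal_field_def by blast+
  have nxq: "\<And>q. q \<in> U \<Longrightarrow> norp x q (\<xi> q) = \<xi> q" using nx normal_field_def by blast
  have neq: "\<And>q. q \<in> U \<Longrightarrow> norp x q (\<eta> q) = \<eta> q" using ne normal_field_def by blast
  have sxi: "smooth_on U (Dn x i \<xi>)" and sei: "smooth_on U (Dn x i \<eta>)"
    using smooth_Dn[OF L _ i] sx se by blast+
  have nDn: "\<And>q k f. q \<in> U \<Longrightarrow> norp x q (Dn x k f q) = Dn x k f q"
    unfolding Dn_def using norp_idem gd by blast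
  have ipn: "\<And>q w n. q \<in> U \<Longrightarrow> norp x q n = n \<Longrightarrow> ip w n = ip (norp x q w) n"
    using ip_norp_normal gd by metis
  define F where "F = (\<lambda>q. ip (\<xi> q) (Dn x i \<eta> q) + ip (Dn x i \<xi> q) (\<eta> q))"
  have eqF: "\<And>q. q \<in> U \<Longrightarrow> Dd i (\<lambda>q. ip (\<xi> q) (\<eta> q)) q = F q"
  proof -
    fix q assume q: "q \<in> U"
    have "Dd i (\<lambda>q. ip (\<xi> q) (\<eta> q)) q = ip (\<xi> q) (Dd i \<eta> q) + ip (Dd i \<xi> q) (\<eta> q)"
      by (rule Dd_ip[OF smooth_diffble[OF U q sx] smooth_diffble[OF U q se]])
    also have "ip (\<xi> q) (Dd i \<eta> q) = ip (\<xi> q) (Dn x i \<eta> q)"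
      using ipn[OF q nxq[OF q], of "Dd i \<eta> q"] by (simp add: ip_sym[of "\<xi> q"] Dn_def)
    also have "ip (Dd i \<xi> q) (\<eta> q) = ip (Dn x i \<xi> q) (\<eta> q)"
      using ipn[OF q neq[OF q], of "Dd i \<xi> q"] by (simp add: Dn_def)
    finally show "Dd i (\<lambda>q. ip (\<xi> q) (\<eta> q)) q = F q" by (simp add: F_def)
  qed
  have "Dd j (Dd i (\<lambda>q. ip (\<xi> q) (\<eta> q))) p = Dd j F p"
    by (rule Dd_cong[OF U pU eqF])
  also have "\<dots> = Dd j (\<lambda>q. ip (\<xi> q) (Dn x i \<eta> q)) p + Dd j (\<lambda>q. ip (Dn x i \<xi> q) (\<eta> q)) p"
    unfolding F_def
    by (rule Dd_add[OF diffble_bil[OF bb_ip smooth_diffble[OF U pU sx] smooth_diffble[OF U pU sei]]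
                       diffble_bil[OF bb_ip smooth_diffble[OF U pU sxi] smooth_diffble[OF U pU se]]])
  also have "Dd j (\<lambda>q. ip (\<xi> q) (Dn x i \<eta> q)) p = ip (\<xi> p) (Dd j (Dn x i \<eta>) p) + ip (Dd j \<xi> p) (Dn x i \<eta> p)"
    by (rule Dd_ip[OF smooth_diffble[OF U pU sx] smooth_diffble[OF U pU sei]])
  also have "Dd j (\<lambda>q. ip (Dn x i \<xi> q) (\<eta> q)) p = ip (Dn x i \<xi> p) (Dd j \<eta> p) + ip (Dd j (Dn x i \<xi>) p) (\<eta> p)"
    by (rule Dd_ip[OF smooth_diffble[OF U pU sxi] smooth_diffble[OF U pU se]])
  also have "ip (\<xi> p) (Dd j (Dn x i \<eta>) p) = ip (\<xi> p) (Dn x j (Dn x i \<eta>) p)"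
    using ipn[OF pU nxq[OF pU], of "Dd j (Dn x i \<eta>) p"] by (simp add: ip_sym[of "\<xi> p"] Dn_def)
  also have "ip (Dd j \<xi> p) (Dn x i \<eta> p) = ip (Dn x j \<xi> p) (Dn x i \<eta> p)"
    using ipn[OF pU nDn[OF pU, of i \<eta>], of "Dd j \<xi> p"] by (simp add: Dn_def)
  also have "ip (Dn x i \<xi> p) (Dd j \<eta> p) = ip (Dn x i \<xi> p) (Dn x j \<eta> p)"
    using ipn[OF pU nDn[OF pU, of i \<xi>], of "Dd j \<eta> p"] unfolding Dn_def by (metis ip_sym)
  also have "ip (Dd j (Dn x i \<xi>) p) (\<eta> p) = ip (Dn x j (Dn x i \<xi>) p) (\<eta> p)"
    using ipn[OF pU neq[OF pU], of "Dd j (Dn x i \<xi>) p"] by (simp add: Dn_def)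
  finally show ?thesis .
qed

lemma skew:
  assumes L: "lorentz_surface x U" and nx: "normal_field x U \<xi>" and ne: "normal_field x U \<eta>"
    and pU: "p \<in> U"
  shows "ip (RD x \<xi> p) (\<eta> p) + ip (\<xi> p) (RD x \<eta> p) = 0"
proof -
  have U: "open U" using L lor_open by blast
  have sx: "smooth_on U \<xi>" and se: "smooth_on U \<eta>" using nx ne normal_field_def by blast+
  have b1: "(1::real,0::real) \<in> Basis" and b2: "(0::real,1::real) \<in> Basis" by (auto simp: Basis_prod_def)
  have sf: "smooth_on U (\<lambda>q. ip (\<xi> q) (\<eta> q))" by (rule smooth_ip[OF U sx se])
  have "Dv (Du (\<lambda>q. ip (\<xi> q) (\<eta> q))) p = Du (Dv (\<lambda>q. ip (\<xi> q) (\<eta> q))) p"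
    by (rule schwarz[OF U pU sf])
  then have E: "Dd (0,1) (Dd (1,0) (\<lambda>q. ip (\<xi> q) (\<eta> q))) p = Dd (1,0) (Dd (0,1) (\<lambda>q. ip (\<xi> q) (\<eta> q))) p"
    by (simp add: Du_Dd Dv_Dd)
  note s1 = second[OF L nx ne pU b1 b2] and s2 = second[OF L nx ne pU b2 b1]
  have "RD x \<xi> p = Dn x (1,0) (Dn x (0,1) \<xi>) p - Dn x (0,1) (Dn x (1,0) \<xi>) p"
    by (simp add: RD_def Dnu_Dn Dnv_Dn)
  moreover have "RD x \<eta> p = Dn x (1,0) (Dn x (0,1) \<eta>) p - Dn x (0,1) (Dn x (1,0) \<eta>) p"
    by (simp add: RD_def Dnu_Dn Dnv_Dn)
  moreover have "ip (Dn x (0, 1) \<xi> p) (Dn x (1, 0) \<eta> p) = ip (Dn x (1, 0) \<eta> p) (Dn x (0, 1) \<xi> p)"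
    "ip (Dn x (1, 0) \<xi> p) (Dn x (0, 1) \<eta> p) = ip (Dn x (0, 1) \<eta> p) (Dn x (1, 0) \<xi> p)"
    by (simp_all add: ip_sym)
  ultimately show ?thesis using E s1 s2 by (simp add: ip_lin)
qed




lemma ip_nondeg:
  assumes "\<And>w. ip v w = 0"
  shows "v = 0"
proof -
  have "ip v (axis 1 1) = v$1" "ip v (axis 2 1) = v$2" "ip v (axis 3 1) = - v$3" "ip v (axis 4 1) = - v$4"
    by (simp_all add: ip_def axis_def)
  then have "v$1 = 0" "v$2 = 0" "v$3 = 0" "v$4 = 0" using assms by (metis neg_equal_0_iff_equal)+
  then show ?thesis by (simp add: vec_eq_iff forall_4)
qed

lemma SP:
  fixes e1 e2 n1 n2 v :: "real^4"
  assumes imm: "\<And>a b. a *\<^sub>R e1 + b *\<^sub>R e2 = 0 \<Longrightarrow> a = 0 \<and> b = 0"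
    and o: "ip n1 e1 = 0" "ip n1 e2 = 0" "ip n2 e1 = 0" "ip n2 e2 = 0" "ip n1 n1 = 0" "ip n1 n2 \<noteq> 0"
    and v: "ip v e1 = 0" "ip v e2 = 0" "ip v n1 = 0" "ip v n2 = 0"
  shows "v = 0"
proof -
  define L where "L = (\<lambda>c::real^4. c$1 *\<^sub>R e1 + c$2 *\<^sub>R e2 + c$3 *\<^sub>R n1 + c$4 *\<^sub>R n2)"
  have lin: "linear L" unfolding L_def
    by (rule linearI) (simp_all add: algebra_simps)
  have inj: "inj L"
    unfolding linear_injective_0[OF lin]
  proof (intro allI impI)
    fix c :: "real^4" assume c: "L c = 0"
    have "ip (L c) n1 = c$4 * ip n2 n1" unfolding L_def
      using o by (simp add: ip_lin ip_sym[of e1] ip_sym[of e2])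
    then have c4: "c$4 = 0" using c o(6) by (simp add: ip_lin ip_sym[of n2])
    have "ip (L c) n2 = c$3 * ip n1 n2" unfolding L_def
      using o c4 by (simp add: ip_lin ip_sym[of e1] ip_sym[of e2])
    then have c3: "c$3 = 0" using c o(6) by (simp add: ip_lin)
    have "c$1 *\<^sub>R e1 + c$2 *\<^sub>R e2 = 0" using c c3 c4 by (simp add: L_def)
    then have "c$1 = 0" "c$2 = 0" using imm by blast+
    then show "c = 0" using c3 c4 by (simp add: vec_eq_iff forall_4)
  qed
  have surj: "surj L" by (rule linear_injective_imp_surjective[OF lin inj]) simp
  show ?thesis
  proof (rule ip_nondeg)
    fix w
    obtain c where "w = L c" using surj by (metis surjD)
    then show "ip v w = 0" using v by (simp add: L_def ip_lin)
  qed
qed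




lemma smooth_gi:
  assumes L: "lorentz_surface x U"
  shows "smooth_on U (gi11 x)" "smooth_on U (gi12 x)" "smooth_on U (gi22 x)"
proof -
  have U: "open U" using L lor_open by blast
  have sx: "smooth_on U x" using L lor_smooth by blast
  have su: "smooth_on U (Du x)" and sv: "smooth_on U (Dv x)" using smooth_Du smooth_Dv sx by blast+
  have s11: "smooth_on U (g11 x)" unfolding g11_def[abs_def] by (rule smooth_ip[OF U su su])
  have s12: "smooth_on U (g12 x)" unfolding g12_def[abs_def] by (rule smooth_ip[OF U su sv])
  have s22: "smooth_on U (g22 x)" unfolding g22_def[abs_def] by (rule smooth_ip[OF U sv sv])
  have sd: "smooth_on U (gdet x)" unfolding gdet_def[abs_def] power2_eq_square
    by (intro smooth_diff smooth_mult U s11 s12 s22)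
  have nz: "\<And>q. q \<in> U \<Longrightarrow> gdet x q \<noteq> 0" using L lor_gdet by blast
  show "smooth_on U (gi11 x)" unfolding gi11_def[abs_def]
    by (rule smooth_divide[OF U nz s22 sd])
  show "smooth_on U (gi22 x)" unfolding gi22_def[abs_def]
    by (rule smooth_divide[OF U nz s11 sd])
  show "smooth_on U (gi12 x)" unfolding gi12_def[abs_def]
    by (rule smooth_divide[OF U nz smooth_uminus[OF U s12] sd])
qed

lemma H_normal:
  assumes L: "lorentz_surface x U"
  shows "normal_field x U (meancurv x)"
proof -
  have U: "open U" using L lor_open by blast
  have sx: "smooth_on U x" using L lor_smooth by blast
  have h11: "smooth_on U (h11 x)" unfolding h11_def[abs_def]
    by (rule smooth_norp[OF L smooth_Du[OF smooth_Du[OF sx]]])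
  have h12: "smooth_on U (h12 x)" unfolding h12_def[abs_def]
    by (rule smooth_norp[OF L smooth_Dv[OF smooth_Du[OF sx]]])
  have h22: "smooth_on U (h22 x)" unfolding h22_def[abs_def]
    by (rule smooth_norp[OF L smooth_Dv[OF smooth_Dv[OF sx]]])
  note g = smooth_gi[OF L]
  have "smooth_on U (meancurv x)" unfolding meancurv_def[abs_def]
    by (intro smooth_scaleR smooth_add smooth_mult smooth_const U h11 h12 h22 g)
  moreover have "\<And>p. p \<in> U \<Longrightarrow> norp x p (meancurv x p) = meancurv x p"
  proof -
    fix p assume "p \<in> U"
    then have gd: "gdet x p \<noteq> 0" using L lor_gdet by blast
    show "norp x p (meancurv x p) = meancurv x p"
      by (simp add: meancurv_def norp_add norp_scale h11_def h12_def h22_def norp_idem[OF gd])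
  qed
  ultimately show ?thesis unfolding normal_field_def by blast
qed

lemma RD_H:
  assumes L: "lorentz_surface x U" and par: "parallel_mean_curvature x U" and pU: "p \<in> U"
  shows "RD x (meancurv x) p = 0"
proof -
  have U: "open U" using L lor_open by blast
  have a: "Du (Dnv x (meancurv x)) p = 0"
  proof -
    have "Dd (1,0) (Dnv x (meancurv x)) p = Dd (1,0) (\<lambda>q. 0::real^4) p"
      by (rule Dd_cong[OF U pU]) (use par parallel_mean_curvature_def in blast)
    then show ?thesis by (simp add: Du_Dd Dd_def)
  qed
  have b: "Dv (Dnu x (meancurv x)) p = 0"
  proof -
    have "Dd (0,1) (Dnu x (meancurv x)) p = Dd (0,1) (\<lambda>q. 0::real^4) p"
      by (rule Dd_cong[OF U pU]) (use par parallel_mean_curvature_def in blast)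
    then show ?thesis by (simp add: Dv_Dd Dd_def)
  qed
  show ?thesis by (simp add: RD_def Dnu_def Dnv_def a b norp_zero)
qed

theorem lemma3p1:
  fixes x :: "real \<times> real \<Rightarrow> real^4" and U :: "(real \<times> real) set"
  assumes "lorentz_surface x U"
      and "quasi_minimal x U"
      and "parallel_mean_curvature x U"
  shows "flat_normal_connection x U"
  unfolding flat_normal_connection_def
proof (intro allI impI ballI)
  fix \<xi> p assume nx: "normal_field x U \<xi>" and pU: "p \<in> U"
  note L = assms(1)
  have U: "open U" using L lor_open by blast
  have gd: "gdet x p \<noteq> 0" using L pU lor_gdet by blast
  define H where "H = meancurv x"
  have nH: "normal_field x U H" unfolding H_def by (rule H_normal[OF L])
  have RH: "RD x H p = 0" unfolding H_def by (rule RD_H[OF L assms(3) pU])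
  have Hne: "H p \<noteq> 0" and Hnull: "ip (H p) (H p) = 0"
    using assms(2) pU unfolding quasi_minimal_def H_def by blast+
  obtain w0 where w0: "ip (H p) w0 \<noteq> 0" using ip_nondeg Hne by blast
  define \<eta> where "\<eta> = (\<lambda>q. norp x q w0)"
  have ne: "normal_field x U \<eta>"
    unfolding normal_field_def \<eta>_def
    using smooth_norp[OF L smooth_const] norp_idem lor_gdet[OF L] by blast
  have nHp: "norp x p (H p) = H p" using nH pU normal_field_def by blast
  have nnp: "norp x p (\<eta> p) = \<eta> p" using ne pU normal_field_def by blast
  have nxp: "norp x p (\<xi> p) = \<xi> p" using nx pU normal_field_def by blast
  have c0: "ip (H p) (\<eta> p) \<noteq> 0"
    using w0 ip_norp_normal[OF gd nHp, of w0] by (simp add: \<eta>_def ip_sym)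
  have oH: "ip (H p) (Du x p) = 0" "ip (H p) (Dv x p) = 0" using normal_iff[OF gd] nHp by blast+
  have on: "ip (\<eta> p) (Du x p) = 0" "ip (\<eta> p) (Dv x p) = 0" using normal_iff[OF gd] nnp by blast+
  have ox: "ip (\<xi> p) (Du x p) = 0" "ip (\<xi> p) (Dv x p) = 0" using normal_iff[OF gd] nxp by blast+
  have imm: "\<And>a b. a *\<^sub>R Du x p + b *\<^sub>R Dv x p = 0 \<Longrightarrow> a = 0 \<and> b = 0" using lor_imm[OF L pU] by blast
  have sp: "\<And>v. ip v (Du x p) = 0 \<Longrightarrow> ip v (Dv x p) = 0 \<Longrightarrow> ip v (H p) = 0 \<Longrightarrow> ip v (\<eta> p) = 0 \<Longrightarrow> v = 0"
  proof -
    fix v assume "ip v (Du x p) = 0" "ip v (Dv x p) = 0" "ip v (H p) = 0" "ip v (\<eta> p) = 0"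
    from SP[of "Du x p" "Dv x p" "H p" "\<eta> p" v, OF _ oH on Hnull c0 this] imm show "v = 0" by blast
  qed
  have k1: "ip (H p) (RD x \<eta> p) = 0" using skew[OF L nH ne pU] RH by (simp add: ip_lin)
  have k2: "ip (\<eta> p) (RD x \<eta> p) = 0" using skew[OF L ne ne pU] by (simp add: ip_sym[of "RD x \<eta> p"])
  define b where "b = ip (\<xi> p) (H p) / ip (H p) (\<eta> p)"
  define a where "a = (ip (\<xi> p) (\<eta> p) - b * ip (\<eta> p) (\<eta> p)) / ip (H p) (\<eta> p)"
  define r where "r = \<xi> p - a *\<^sub>R H p - b *\<^sub>R \<eta> p"
  have "r = 0"
  proof (rule sp)
    show "ip r (Du x p) = 0" "ip r (Dv x p) = 0" using oH on ox by (simp_all add: r_def ip_lin)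
    show "ip r (H p) = 0" using c0 Hnull
      by (simp add: r_def ip_lin b_def ip_sym[of "\<eta> p"])
    show "ip r (\<eta> p) = 0" using c0
      by (simp add: r_def ip_lin a_def field_simps)
  qed
  then have xd: "\<xi> p = a *\<^sub>R H p + b *\<^sub>R \<eta> p" by (simp add: r_def algebra_simps)
  have k3: "ip (\<xi> p) (RD x \<eta> p) = 0" using k1 k2 by (simp add: xd ip_lin)
  define v where "v = RD x \<xi> p"
  have nv: "norp x p v = v"
    by (simp add: v_def RD_def Dnu_def Dnv_def norp_diff norp_idem[OF gd])
  have ov: "ip v (Du x p) = 0" "ip v (Dv x p) = 0" using normal_iff[OF gd] nv by blast+
  have vH: "ip v (H p) = 0" using skew[OF L nx nH pU] RH by (simp add: v_def ip_lin)
  have vn: "ip v (\<eta> p) = 0" using skew[OF L nx ne pU] k3 by (simp add: v_def)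
  show "RD x \<xi> p = 0" using sp[OF ov vH vn] by (simp add: v_def)
qed


end
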